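(* Let $G$ be a graph on $n$ vertices, $h\geq 3$ a constant, $\Lambda>0$, and $s=\frac{1}{h^h}$. Fix a vertex $v$ with $t_G(v)\geq \Lambda\cdot (2h\log n)^{(h-1)^2}\cdot 2/s$. Then there exists a vector $P\in\mathsf{Product}_h(\Lambda)$ such that $v[P]\geq (1-1/e)^{h-1}\cdot s$.
   Context: An $h$-cycle is a cycle on $h$ distinct vertices; $t_G(v)$ is the number of $h$-cycles of $G$ containing $v$. Logarithms are base 2. $\mathsf{Product}_h(\Lambda)$ is the set of vectors $(p_1,\dots,p_h)\in[0,1]^h$ such that each $p_i\in\{2^{-j}: j \text{ an integer}, 0\leq j\leq \log(\Lambda)+1\}$ and $\prod_{i=1}^h p_i\leq 1/\Lambda$. For $P=(p_1,\dots,p_h)$, the $P$-discovery experiment is: sample a uniformly random coloring $\varphi:V(G)\to[h]$, keep each vertex of color class $i$ independently with probability $p_i$, and let $F$ be the induced subgraph on kept vertices; $v$ is $P$-discovered if $v$ lies on an $h$-cycle of $F$ whose vertices receive $h$ distinct colors. $v[P]$ is the probability that $v$ is $P$-discovered. *)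

theory Defs
  imports Complex_Main "HOL-Library.FuncSet"
begin

text \<open>Graphs: finite vertex set V, symmetric irreflexive adjacency E.
  An h-cycle is given by a list of h distinct vertices, consecutive ones
  (cyclically) adjacent; the cycle itself is its edge set.\<close>

definition cycle_list :: "('a \<Rightarrow> 'a \<Rightarrow> bool) \<Rightarrow> 'a set \<Rightarrow> nat \<Rightarrow> 'a list \<Rightarrow> bool" where
  "cycle_list E V h xs \<longleftrightarrow> length xs = h \<and> distinct xs \<and> set xs \<subseteq> V \<and>
     (\<forall>i<h. E (xs ! i) (xs ! ((i + 1) mod h)))"

definition cycle_edges :: "'a list \<Rightarrow> 'a set set" where
  "cycle_edges xs = {{xs ! i, xs ! ((i + 1) mod length xs)} | i. i < length xs}"

definition h_cycles :: "('a \<Rightarrow> 'a \<Rightarrow> bool) \<Rightarrow> 'a set \<Rightarrow> nat \<Rightarrow> 'a set set set" where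
  "h_cycles E V h = cycle_edges ` {xs. cycle_list E V h xs}"

definition t_count :: "('a \<Rightarrow> 'a \<Rightarrow> bool) \<Rightarrow> 'a set \<Rightarrow> nat \<Rightarrow> 'a \<Rightarrow> nat" where
  "t_count E V h v = card {C \<in> h_cycles E V h. v \<in> \<Union>C}"

definition Product :: "nat \<Rightarrow> real \<Rightarrow> real list set" where
  "Product h \<Lambda> = {p. length p = h \<and>
      (\<forall>i<h. \<exists>j::nat. real j \<le> log 2 \<Lambda> + 1 \<and> p ! i = (1/2) ^ j) \<and>
      prod_list p \<le> 1 / \<Lambda>}"

definition discovered :: "('a \<Rightarrow> 'a \<Rightarrow> bool) \<Rightarrow> nat \<Rightarrow> ('a \<Rightarrow> nat) \<Rightarrow> 'a set \<Rightarrow> 'a \<Rightarrow> bool" where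
  "discovered E h \<phi> S v \<longleftrightarrow>
     (\<exists>xs. cycle_list E S h xs \<and> v \<in> set xs \<and> inj_on \<phi> (set xs))"

text \<open>v[P]: probability of discovery; uniform colouring V -> {0..<h}, then each vertex
  of colour i kept independently with probability p!i.\<close>
definition disc_prob :: "('a \<Rightarrow> 'a \<Rightarrow> bool) \<Rightarrow> 'a set \<Rightarrow> nat \<Rightarrow> real list \<Rightarrow> 'a \<Rightarrow> real" where
  "disc_prob E V h p v =
     (\<Sum>\<phi> \<in> V \<rightarrow>\<^sub>E {0..<h}. \<Sum>S \<in> Pow V.
        (1 / real h ^ card V) * (\<Prod>u\<in>S. p ! \<phi> u) * (\<Prod>u\<in>V - S. 1 - p ! \<phi> u) *
        (if discovered E h \<phi> S v then 1 else 0))"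

end

theory Submission
  imports Defs
begin


definition PrW :: "'a set \<Rightarrow> 'b set \<Rightarrow> ('a \<Rightarrow> 'b \<Rightarrow> real) \<Rightarrow> (('a \<Rightarrow> 'b) \<Rightarrow> bool) \<Rightarrow> real" where
  "PrW V Om \<rho> P = (\<Sum>\<psi> \<in> PiE V (\<lambda>_. Om). (\<Prod>u\<in>V. \<rho> u (\<psi> u)) * (if P \<psi> then 1 else 0))"

definition validW :: "'a set \<Rightarrow> 'b set \<Rightarrow> ('a \<Rightarrow> 'b \<Rightarrow> real) \<Rightarrow> bool" where
  "validW V Om \<rho> \<longleftrightarrow> (\<forall>u\<in>V. (\<forall>x\<in>Om. 0 \<le> \<rho> u x) \<and> sum (\<rho> u) Om = 1)"

definition condW :: "('a \<Rightarrow> 'b \<Rightarrow> real) \<Rightarrow> 'a \<Rightarrow> 'b \<Rightarrow> 'a \<Rightarrow> 'b \<Rightarrow> real" where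
  "condW \<rho> a t = \<rho>(a := (\<lambda>x. if x = t then 0 else \<rho> a x / (1 - \<rho> a t)))"

lemma PrW_insert:
  assumes "a \<notin> V'" "finite V'"
  shows "PrW (insert a V') Om \<rho> P = (\<Sum>y\<in>Om. \<rho> a y * PrW V' Om \<rho> (\<lambda>g. P (g(a:=y))))"
proof -
  have "PrW (insert a V') Om \<rho> P =
     (\<Sum>\<psi> \<in> (\<lambda>(y, g). g(a := y)) ` (Om \<times> PiE V' (\<lambda>_. Om)). (\<Prod>u\<in>insert a V'. \<rho> u (\<psi> u)) * (if P \<psi> then 1 else 0))"
    unfolding PrW_def PiE_insert_eq by simp
  also have "\<dots> = (\<Sum>(y,g) \<in> Om \<times> PiE V' (\<lambda>_. Om). (\<Prod>u\<in>insert a V'. \<rho> u ((g(a:=y)) u)) * (if P (g(a:=y)) then 1 else 0))"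
    by (subst sum.reindex[OF inj_combinator[OF assms(1)]]) (simp add: case_prod_unfold)
  also have "\<dots> = (\<Sum>y\<in>Om. \<Sum>g\<in>PiE V' (\<lambda>_. Om). \<rho> a y * ((\<Prod>u\<in>V'. \<rho> u (g u)) * (if P (g(a:=y)) then 1 else 0)))"
  proof -
    have "\<And>y g. (\<Prod>u\<in>insert a V'. \<rho> u ((g(a:=y)) u)) = \<rho> a y * (\<Prod>u\<in>V'. \<rho> u (g u))"
    proof -
      fix y g
      have "(\<Prod>u\<in>V'. \<rho> u ((g(a:=y)) u)) = (\<Prod>u\<in>V'. \<rho> u (g u))"
        by (intro prod.cong) (use assms in auto)
      then show "(\<Prod>u\<in>insert a V'. \<rho> u ((g(a:=y)) u)) = \<rho> a y * (\<Prod>u\<in>V'. \<rho> u (g u))"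
        using assms by (simp add: prod.insert)
    qed
    then show ?thesis by (simp add: sum.cartesian_product[symmetric] mult.assoc)
  qed
  also have "\<dots> = (\<Sum>y\<in>Om. \<rho> a y * PrW V' Om \<rho> (\<lambda>g. P (g(a:=y))))"
    unfolding PrW_def by (simp add: sum_distrib_left)
  finally show ?thesis .
qed

lemma PrW_nonneg:
  assumes "validW V Om \<rho>"
  shows "0 \<le> PrW V Om \<rho> P"
  unfolding PrW_def using assms unfolding validW_def
  by (intro sum_nonneg mult_nonneg_nonneg prod_nonneg) (auto simp: PiE_def Pi_def)

lemma PrW_mono:
  assumes "validW V Om \<rho>" "\<And>\<psi>. \<psi> \<in> PiE V (\<lambda>_. Om) \<Longrightarrow> P \<psi> \<Longrightarrow> P' \<psi>"
  shows "PrW V Om \<rho> P \<le> PrW V Om \<rho> P'"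
  unfolding PrW_def
proof (rule sum_mono)
  fix \<psi> assume h: "\<psi> \<in> PiE V (\<lambda>_. Om)"
  have "0 \<le> (\<Prod>u\<in>V. \<rho> u (\<psi> u))"
    using assms(1) h unfolding validW_def by (intro prod_nonneg) (auto simp: PiE_def Pi_def)
  then show "(\<Prod>u\<in>V. \<rho> u (\<psi> u)) * (if P \<psi> then 1 else 0) \<le> (\<Prod>u\<in>V. \<rho> u (\<psi> u)) * (if P' \<psi> then 1 else 0)"
    using assms(2)[OF h] by auto
qed

lemma PrW_split:
  "PrW V Om \<rho> P = PrW V Om \<rho> (\<lambda>\<psi>. Q \<psi> \<and> P \<psi>) + PrW V Om \<rho> (\<lambda>\<psi>. \<not> Q \<psi> \<and> P \<psi>)"
  unfolding PrW_def by (simp add: sum.distrib[symmetric]) (intro sum.cong, auto)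

lemma PrW_True:
  assumes "finite V" "validW V Om \<rho>"
  shows "PrW V Om \<rho> (\<lambda>_. True) = 1"
  using assms
proof (induction V rule: finite_induct)
  case empty
  then show ?case by (simp add: PrW_def)
next
  case (insert a V')
  have v: "validW V' Om \<rho>" using insert.prems unfolding validW_def by auto
  show ?case using insert.IH[OF v] insert.hyps insert.prems
    by (simp add: PrW_insert validW_def)
qed

lemma PrW_indep:
  assumes "finite V" "a \<in> V" "y \<in> Om" "validW V Om \<rho>" "finite Om"
    and ind: "\<And>\<psi> x. G (\<psi>(a:=x)) = G \<psi>"
  shows "PrW V Om \<rho> (\<lambda>\<psi>. \<psi> a = y \<and> G \<psi>) = \<rho> a y * PrW V Om \<rho> G"
proof -
  have V: "V = insert a (V - {a})" using assms by auto
  have f: "finite (V - {a})" using assms by auto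
  have fO: "finite Om \<or> True" by simp
  have "PrW V Om \<rho> (\<lambda>\<psi>. \<psi> a = y \<and> G \<psi>) = (\<Sum>z\<in>Om. \<rho> a z * PrW (V-{a}) Om \<rho> (\<lambda>g. z = y \<and> G g))"
    by (subst V, subst PrW_insert) (use f ind in auto)
  also have "\<dots> = (\<Sum>z\<in>Om. if z = y then \<rho> a y * PrW (V-{a}) Om \<rho> G else 0)"
    by (intro sum.cong) (auto simp: PrW_def)
  also have "\<dots> = \<rho> a y * PrW (V-{a}) Om \<rho> G"
    using assms(3,5) by (simp add: sum.delta' sum.delta)
  finally have 1: "PrW V Om \<rho> (\<lambda>\<psi>. \<psi> a = y \<and> G \<psi>) = \<rho> a y * PrW (V-{a}) Om \<rho> G" .
  have "PrW V Om \<rho> G = (\<Sum>z\<in>Om. \<rho> a z * PrW (V-{a}) Om \<rho> G)"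
    by (subst V, subst PrW_insert) (use f ind in auto)
  also have "\<dots> = PrW (V-{a}) Om \<rho> G"
    using assms(2,4) by (simp add: sum_distrib_right[symmetric] validW_def)
  finally show ?thesis using 1 by simp
qed

lemma PrW_cond:
  assumes "finite V" "a \<in> V" "\<rho> a t \<noteq> 1"
  shows "PrW V Om \<rho> (\<lambda>\<psi>. \<psi> a \<noteq> t \<and> P \<psi>) = (1 - \<rho> a t) * PrW V Om (condW \<rho> a t) P"
  unfolding PrW_def sum_distrib_left
proof (intro sum.cong refl)
  fix \<psi>
  have r1: "(\<Prod>u\<in>V. \<rho> u (\<psi> u)) = \<rho> a (\<psi> a) * (\<Prod>u\<in>V-{a}. \<rho> u (\<psi> u))"
    using assms by (simp add: prod.remove)
  have r2: "(\<Prod>u\<in>V. condW \<rho> a t u (\<psi> u)) = condW \<rho> a t a (\<psi> a) * (\<Prod>u\<in>V-{a}. \<rho> u (\<psi> u))"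
    using assms by (simp add: prod.remove condW_def)
  have ne: "1 - \<rho> a t \<noteq> 0" using assms by simp
  show "(\<Prod>u\<in>V. \<rho> u (\<psi> u)) * (if \<psi> a \<noteq> t \<and> P \<psi> then 1 else 0) =
        (1 - \<rho> a t) * ((\<Prod>u\<in>V. condW \<rho> a t u (\<psi> u)) * (if P \<psi> then 1 else 0))"
    unfolding r1 r2 using ne by (auto simp: condW_def)
qed

lemma validW_cond:
  assumes "finite Om" "validW V Om \<rho>" "a \<in> V" "t \<in> Om" "\<rho> a t < 1"
  shows "validW V Om (condW \<rho> a t)"
proof -
  have s: "sum (\<rho> a) Om = \<rho> a t + sum (\<rho> a) (Om - {t})"
    using assms by (simp add: sum.remove)
  have s1: "sum (\<rho> a) Om = 1" using assms unfolding validW_def by auto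
  have "sum (condW \<rho> a t a) Om = 0 + sum (\<lambda>x. \<rho> a x / (1 - \<rho> a t)) (Om - {t})"
    using assms by (simp add: sum.remove condW_def)
  also have "\<dots> = 1" using s s1 assms by (simp add: sum_divide_distrib[symmetric])
  finally show ?thesis using assms unfolding validW_def condW_def by auto
qed

lemma validW_le1:
  assumes "finite Om" "validW V Om \<rho>" "a \<in> V" "t \<in> Om"
  shows "\<rho> a t \<le> 1"
proof -
  have "\<rho> a t \<le> sum (\<rho> a) Om"
    using assms by (intro member_le_sum) (auto simp: validW_def)
  then show ?thesis using assms by (auto simp: validW_def)
qed

lemma level_step:
  fixes A :: "'a set" and \<beta> r :: real
  assumes fV: "finite V" and fO: "finite Om" and tO: "t \<in> Om" and b0: "0 \<le> \<beta>" and r0: "0 \<le> r" and r1: "r \<le> 1"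
    and pres: "\<And>\<rho> a. validW V Om \<rho> \<Longrightarrow> Adm \<rho> \<Longrightarrow> a \<in> V \<Longrightarrow> \<rho> a t < 1 \<Longrightarrow> Adm (condW \<rho> a t)"
  shows "finite A \<Longrightarrow> A \<subseteq> V \<Longrightarrow> (\<forall>a\<in>A. \<forall>\<psi> x. G a (\<psi>(a:=x)) = G a \<psi>) \<Longrightarrow>
     (\<forall>a\<in>A. \<forall>\<rho>. validW V Om \<rho> \<and> Adm \<rho> \<longrightarrow> \<beta> \<le> PrW V Om \<rho> (G a)) \<Longrightarrow>
     \<forall>\<rho>. validW V Om \<rho> \<longrightarrow> Adm \<rho> \<longrightarrow> (\<forall>u\<in>A. r \<le> \<rho> u t) \<longrightarrow>
       \<beta> * (1 - (1 - r) ^ card A) \<le> PrW V Om \<rho> (\<lambda>\<psi>. \<exists>a\<in>A. \<psi> a = t \<and> G a \<psi>)"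
proof (induction A rule: finite_induct)
  case empty
  then show ?case by (simp add: PrW_nonneg)
next
  case (insert a A')
  show ?case
  proof (intro allI impI)
    fix \<rho> assume v: "validW V Om \<rho>" and ad: "Adm \<rho>" and rr: "\<forall>u\<in>insert a A'. r \<le> \<rho> u t"
    let ?P = "\<lambda>\<psi>. \<exists>a'\<in>insert a A'. \<psi> a' = t \<and> G a' \<psi>"
    let ?P' = "\<lambda>\<psi>. \<exists>a'\<in>A'. \<psi> a' = t \<and> G a' \<psi>"
    have aV: "a \<in> V" using insert by auto
    define k where "k = card A'"
    have ck: "card (insert a A') = Suc k" using insert k_def by simp
    define q where "q = \<rho> a t"
    have q1: "q \<le> 1" using validW_le1[OF fO v aV tO] q_def by simp
    have rq: "r \<le> q" using rr q_def by auto
    have ind: "\<forall>\<psi> x. G a (\<psi>(a:=x)) = G a \<psi>" using insert.prems by (simp only: ball_simps insert_iff) blast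
    have "PrW V Om \<rho> ?P = PrW V Om \<rho> (\<lambda>\<psi>. \<psi> a = t \<and> ?P \<psi>) + PrW V Om \<rho> (\<lambda>\<psi>. \<not> \<psi> a = t \<and> ?P \<psi>)"
      by (rule PrW_split)
    moreover have "PrW V Om \<rho> (\<lambda>\<psi>. \<psi> a = t \<and> G a \<psi>) \<le> PrW V Om \<rho> (\<lambda>\<psi>. \<psi> a = t \<and> ?P \<psi>)"
      by (rule PrW_mono[OF v]) auto
    moreover have "PrW V Om \<rho> (\<lambda>\<psi>. \<psi> a = t \<and> G a \<psi>) = q * PrW V Om \<rho> (G a)"
      using PrW_indep[OF fV aV tO v fO, of "G a"] ind q_def by auto
    moreover have "\<beta> \<le> PrW V Om \<rho> (G a)" using insert.prems v ad by auto
    moreover have "PrW V Om \<rho> (\<lambda>\<psi>. \<psi> a \<noteq> t \<and> ?P' \<psi>) \<le> PrW V Om \<rho> (\<lambda>\<psi>. \<not> \<psi> a = t \<and> ?P \<psi>)"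
      by (rule PrW_mono[OF v]) auto
    moreover have "(1 - q) * (\<beta> * (1 - (1 - r) ^ k)) \<le> PrW V Om \<rho> (\<lambda>\<psi>. \<psi> a \<noteq> t \<and> ?P' \<psi>)"
    proof (cases "q = 1")
      case True
      then show ?thesis using PrW_nonneg[OF v] by simp
    next
      case False
      have e: "PrW V Om \<rho> (\<lambda>\<psi>. \<psi> a \<noteq> t \<and> ?P' \<psi>) = (1 - q) * PrW V Om (condW \<rho> a t) ?P'"
        using PrW_cond[OF fV aV] False q_def by auto
      have v': "validW V Om (condW \<rho> a t)" using validW_cond[OF fO v aV tO] q1 False q_def by auto
      have ad': "Adm (condW \<rho> a t)" using pres[OF v ad aV] q1 False q_def by auto
      have rr': "\<forall>u\<in>A'. r \<le> condW \<rho> a t u t" using rr insert.hyps by (auto simp: condW_def)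
      have "\<beta> * (1 - (1 - r) ^ k) \<le> PrW V Om (condW \<rho> a t) ?P'"
        using insert.IH insert.prems v' ad' rr' k_def by auto
      then show ?thesis unfolding e using q1 by (intro mult_left_mono) auto
    qed
    moreover have "q * \<beta> \<le> q * PrW V Om \<rho> (G a)"
    proof -
      have "0 \<le> q" using v aV tO q_def by (auto simp: validW_def)
      then show ?thesis using insert.prems v ad by (intro mult_left_mono) auto
    qed
    ultimately have L: "q * \<beta> + (1 - q) * (\<beta> * (1 - (1 - r) ^ k)) \<le> PrW V Om \<rho> ?P"
      by linarith
    have pk: "0 \<le> (1 - r) ^ k" using r1 by simp
    have "\<beta> * (1 - (1 - r) ^ Suc k) \<le> q * \<beta> + (1 - q) * (\<beta> * (1 - (1 - r) ^ k))"
    proof -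
      have "q * \<beta> + (1 - q) * (\<beta> * (1 - (1 - r) ^ k)) - \<beta> * (1 - (1 - r) ^ Suc k)
          = \<beta> * (1 - r) ^ k * (q - r)"
        by (simp add: algebra_simps)
      moreover have "0 \<le> \<beta> * (1 - r) ^ k * (q - r)" using b0 pk rq by simp
      ultimately show ?thesis by linarith
    qed
    then show "\<beta> * (1 - (1 - r) ^ card (insert a A')) \<le> PrW V Om \<rho> ?P" using L ck by simp
  qed
qed

fun good :: "'a set \<Rightarrow> 'a list set \<Rightarrow> nat list \<Rightarrow> bool" where
  "good V Q [] = ([] \<in> Q)"
| "good V Q (m # ms) = (\<exists>A\<subseteq>V. m \<le> card A \<and> (\<forall>a\<in>A. good V {ys. a # ys \<in> Q} ms))"

definition EvW :: "'a list set \<Rightarrow> 'b list \<Rightarrow> ('a \<Rightarrow> 'b) \<Rightarrow> bool" where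
  "EvW Q ts \<psi> = (\<exists>ys\<in>Q. \<forall>j<length ts. \<psi> (ys ! j) = ts ! j)"

lemma tree_bound:
  fixes rs :: "real list"
  assumes fV: "finite V" and fO: "finite Om"
  shows "(\<forall>ys\<in>Q. distinct ys \<and> length ys = length ts \<and> set ys \<subseteq> V) \<Longrightarrow> good V Q ms \<Longrightarrow>
    length ms = length ts \<Longrightarrow> distinct ts \<Longrightarrow> set ts \<subseteq> Om \<Longrightarrow> length rs = length ts \<Longrightarrow>
    (\<forall>j<length ts. 0 \<le> rs ! j \<and> rs ! j \<le> 1) \<Longrightarrow> validW V Om \<rho> \<Longrightarrow>
    (\<forall>u\<in>V. \<forall>j<length ts. rs ! j \<le> \<rho> u (ts ! j)) \<Longrightarrow>
    (\<Prod>j<length ts. 1 - (1 - rs ! j) ^ (ms ! j)) \<le> PrW V Om \<rho> (EvW Q ts)"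
proof (induction ts arbitrary: Q ms rs \<rho>)
  case Nil
  have e: "EvW Q [] = (\<lambda>_. True)" using Nil.prems(2,3) unfolding EvW_def by force
  have "PrW V Om \<rho> (EvW Q []) = 1"
    unfolding e by (rule PrW_True[OF fV Nil.prems(8)])
  then show ?case by simp
next
  case (Cons t ts)
  obtain m ms' where ms: "ms = m # ms'" using Cons.prems(3) by (cases ms) auto
  obtain r rs' where rs: "rs = r # rs'" using Cons.prems(6) by (cases rs) auto
  obtain A where A: "A \<subseteq> V" "m \<le> card A" "\<forall>a\<in>A. good V {ys. a # ys \<in> Q} ms'"
    using Cons.prems(2) ms by auto
  have fA: "finite A" using A fV finite_subset by auto
  define \<beta> where "\<beta> = (\<Prod>j<length ts. 1 - (1 - rs' ! j) ^ (ms' ! j))"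
  have r01: "0 \<le> r" "r \<le> 1" using Cons.prems(7) rs by auto
  have rs'01: "\<forall>j<length ts. 0 \<le> rs' ! j \<and> rs' ! j \<le> 1" using Cons.prems(7) rs by auto
  have b0: "0 \<le> \<beta>" unfolding \<beta>_def
    using rs'01 by (intro prod_nonneg) (auto simp: power_le_one)
  have tO: "t \<in> Om" using Cons.prems(5) by auto
  have tnot: "t \<notin> set ts" using Cons.prems(4) by auto
  define Adm where "Adm = (\<lambda>\<rho>. \<forall>u\<in>V. \<forall>j<length ts. rs' ! j \<le> \<rho> u (ts ! j))"
  have pres: "\<And>\<rho> a. validW V Om \<rho> \<Longrightarrow> Adm \<rho> \<Longrightarrow> a \<in> V \<Longrightarrow> \<rho> a t < 1 \<Longrightarrow> Adm (condW \<rho> a t)"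
  proof -
    fix \<rho> a assume v: "validW V Om \<rho>" and ad: "Adm \<rho>" and aV: "a \<in> V" and lt: "\<rho> a t < 1"
    show "Adm (condW \<rho> a t)" unfolding Adm_def
    proof (intro ballI allI impI)
      fix u j assume uV: "u \<in> V" and j: "j < length ts"
      have tj: "ts ! j \<noteq> t" using tnot j by auto
      have tjO: "ts ! j \<in> Om" using Cons.prems(5) j by auto
      have le: "rs' ! j \<le> \<rho> u (ts ! j)" using ad uV j Adm_def by auto
      show "rs' ! j \<le> condW \<rho> a t u (ts ! j)"
      proof (cases "u = a")
        case True
        have nn: "0 \<le> \<rho> a (ts ! j)" using v aV tjO by (auto simp: validW_def)
        have q0: "0 \<le> \<rho> a t" using v aV tO by (auto simp: validW_def)
        have "\<rho> a (ts ! j) \<le> \<rho> a (ts ! j) / (1 - \<rho> a t)"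
          using nn q0 lt by (simp add: le_divide_eq mult_left_le)
        then show ?thesis using True tj le by (simp add: condW_def)
      next
        case False
        then show ?thesis using le by (simp add: condW_def)
      qed
    qed
  qed
  have indep: "\<forall>a\<in>A. \<forall>\<psi> x. EvW {ys. a # ys \<in> Q} ts (\<psi>(a:=x)) = EvW {ys. a # ys \<in> Q} ts \<psi>"
  proof (intro ballI allI)
    fix a \<psi> x assume "a \<in> A"
    have "\<And>ys j. a # ys \<in> Q \<Longrightarrow> j < length ts \<Longrightarrow> ys ! j \<noteq> a"
    proof -
      fix ys j assume "a # ys \<in> Q" "j < length ts"
      then have "distinct (a # ys)" "length (a # ys) = length (t # ts)" using Cons.prems(1) by auto
      then show "ys ! j \<noteq> a" using \<open>j < length ts\<close> by (auto simp: nth_mem)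
    qed
    then show "EvW {ys. a # ys \<in> Q} ts (\<psi>(a:=x)) = EvW {ys. a # ys \<in> Q} ts \<psi>"
      unfolding EvW_def by auto
  qed
  have bound: "\<forall>a\<in>A. \<forall>\<rho>. validW V Om \<rho> \<and> Adm \<rho> \<longrightarrow> \<beta> \<le> PrW V Om \<rho> (EvW {ys. a # ys \<in> Q} ts)"
  proof (intro ballI allI impI)
    fix a \<rho> assume aA: "a \<in> A" and h: "validW V Om \<rho> \<and> Adm \<rho>"
    have "\<forall>ys\<in>{ys. a # ys \<in> Q}. distinct ys \<and> length ys = length ts \<and> set ys \<subseteq> V"
      using Cons.prems(1) by fastforce
    moreover have "good V {ys. a # ys \<in> Q} ms'" using A aA by auto
    ultimately show "\<beta> \<le> PrW V Om \<rho> (EvW {ys. a # ys \<in> Q} ts)"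
      unfolding \<beta>_def using Cons.IH[of "{ys. a # ys \<in> Q}" ms' rs' \<rho>] Cons.prems ms rs h rs'01 Adm_def
      by auto
  qed
  have adm: "Adm \<rho>" unfolding Adm_def using Cons.prems(9) rs by force
  have rr: "\<forall>u\<in>A. r \<le> \<rho> u t" using Cons.prems(9) rs A(1) by force
  have main: "\<beta> * (1 - (1 - r) ^ card A) \<le> PrW V Om \<rho> (\<lambda>\<psi>. \<exists>a\<in>A. \<psi> a = t \<and> EvW {ys. a # ys \<in> Q} ts \<psi>)"
    using level_step[OF fV fO tO b0 r01, where Adm=Adm and G="\<lambda>a. EvW {ys. a # ys \<in> Q} ts", OF pres fA A(1) indep bound]
      Cons.prems(8) adm rr by blast
  also have "\<dots> \<le> PrW V Om \<rho> (EvW Q (t # ts))"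
  proof (rule PrW_mono[OF Cons.prems(8)])
    fix \<psi> assume "\<exists>a\<in>A. \<psi> a = t \<and> EvW {ys. a # ys \<in> Q} ts \<psi>"
    then obtain a ys where "a # ys \<in> Q" "\<psi> a = t" "\<forall>j<length ts. \<psi> (ys ! j) = ts ! j"
      unfolding EvW_def by auto
    then show "EvW Q (t # ts) \<psi>" unfolding EvW_def
      by (intro bexI[of _ "a # ys"]) (auto simp: less_Suc_eq_0_disj)
  qed
  finally have M: "\<beta> * (1 - (1 - r) ^ card A) \<le> PrW V Om \<rho> (EvW Q (t # ts))" .
  have "(1 - (1 - r) ^ m) \<le> (1 - (1 - r) ^ card A)"
    using A(2) r01 by (simp add: power_decreasing)
  then have "(1 - (1 - r) ^ m) * \<beta> \<le> \<beta> * (1 - (1 - r) ^ card A)"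
    using b0 by (simp add: mult.commute mult_left_mono)
  moreover have "(\<Prod>j<length (t # ts). 1 - (1 - rs ! j) ^ (ms ! j)) = (1 - (1 - r) ^ m) * \<beta>"
    unfolding \<beta>_def ms rs by (simp only: length_Cons prod.lessThan_Suc_shift nth_Cons_0 nth_Cons_Suc)
  ultimately show ?case using M by linarith
qed



fun CC :: "nat \<Rightarrow> nat \<Rightarrow> nat" where
  "CC M 0 = 1"
| "CC M (Suc k) = 2 * (M + 1) ^ k * CC M k"

lemma exists_max_sum:
  fixes f :: "'c \<Rightarrow> nat"
  assumes "finite T" "T \<noteq> {}"
  shows "\<exists>b\<in>T. sum f T \<le> card T * f b"
proof -
  obtain b where b: "b \<in> T" "f b = Max (f ` T)" using assms
  proof -
    have "Max (f ` T) \<in> f ` T" using assms by (intro Max_in) auto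
    then show ?thesis using that by auto
  qed
  have "sum f T \<le> card T * f b"
    using sum_bounded_above[of T f "f b"] b assms by auto
  then show ?thesis using b by metis
qed

lemma comb:
  assumes fV: "finite V" and cV: "card V < 2 ^ Suc M"
  shows "Q \<noteq> {} \<Longrightarrow> \<forall>ys\<in>Q. length ys = k \<and> set ys \<subseteq> V \<Longrightarrow>
    \<exists>es. length es = k \<and> set es \<subseteq> {0..M} \<and> good V Q (map (\<lambda>e. 2 ^ e) es) \<and> card Q \<le> CC M k * 2 ^ sum_list es"
proof (induction k arbitrary: Q)
  case 0
  then have "Q = {[]}" by fastforce
  then show ?case by (intro exI[of _ "[]"]) auto
next
  case (Suc k)
  have finQ: "finite Q"
    by (rule finite_subset[of _ "{xs. set xs \<subseteq> V \<and> length xs = Suc k}"])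
       (use Suc.prems fV in \<open>auto intro: finite_lists_length_eq\<close>)
  define Qa where "Qa = (\<lambda>a. {ys. a # ys \<in> Q})"
  define X0 where "X0 = hd ` Q"
  have fX0: "finite X0" using finQ X0_def by auto
  have X0V: "X0 \<subseteq> V"
  proof
    fix a assume "a \<in> X0"
    then obtain xs where "xs \<in> Q" "a = hd xs" using X0_def by auto
    moreover then have "xs \<noteq> []" "set xs \<subseteq> V" using Suc.prems by auto
    ultimately show "a \<in> V" by (cases xs) auto
  qed
  have Qa_ne: "\<And>a. a \<in> X0 \<Longrightarrow> Qa a \<noteq> {}"
  proof -
    fix a assume "a \<in> X0"
    then obtain xs where "xs \<in> Q" "a = hd xs" using X0_def by auto
    moreover then have "xs \<noteq> []" using Suc.prems by auto
    ultimately show "Qa a \<noteq> {}" unfolding Qa_def by (cases xs) auto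
  qed
  have Qa_prop: "\<And>a. \<forall>ys\<in>Qa a. length ys = k \<and> set ys \<subseteq> V"
    using Suc.prems unfolding Qa_def by fastforce
  have "\<forall>a\<in>X0. \<exists>es. length es = k \<and> set es \<subseteq> {0..M} \<and> good V (Qa a) (map (\<lambda>e. 2 ^ e) es) \<and> card (Qa a) \<le> CC M k * 2 ^ sum_list es"
  proof
    fix a assume a: "a \<in> X0"
    show "\<exists>es. length es = k \<and> set es \<subseteq> {0..M} \<and> good V (Qa a) (map (\<lambda>e. 2 ^ e) es) \<and> card (Qa a) \<le> CC M k * 2 ^ sum_list es"
      by (rule Suc.IH[OF Qa_ne[OF a] Qa_prop])
  qed
  from bchoice[OF this] obtain F where F0: "\<forall>a\<in>X0. length (F a) = k \<and> set (F a) \<subseteq> {0..M} \<and> good V (Qa a) (map (\<lambda>e. 2 ^ e) (F a)) \<and> card (Qa a) \<le> CC M k * 2 ^ sum_list (F a)"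
    by blast
  then have F: "\<And>a. a \<in> X0 \<Longrightarrow> length (F a) = k \<and> set (F a) \<subseteq> {0..M} \<and> good V (Qa a) (map (\<lambda>e. 2 ^ e) (F a)) \<and> card (Qa a) \<le> CC M k * 2 ^ sum_list (F a)"
    by blast
  define Lk where "Lk = {bs. set bs \<subseteq> {0..M} \<and> length bs = k}"
  have fLk: "finite Lk" unfolding Lk_def by (rule finite_lists_length_eq) simp
  have cLk: "card Lk = (M + 1) ^ k" unfolding Lk_def by (simp add: card_lists_length_eq)
  have Lkne: "Lk \<noteq> {}" unfolding Lk_def by (auto intro!: exI[of _ "replicate k 0"])
  have FX: "F ` X0 \<subseteq> Lk" using F unfolding Lk_def by auto
  have cardQ: "card Q = (\<Sum>a\<in>X0. card (Qa a))"
  proof -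
    have "card Q = (\<Sum>xs\<in>Q. 1)" by simp
    also have "\<dots> = (\<Sum>a\<in>X0. \<Sum>xs\<in>{xs \<in> Q. hd xs = a}. 1)"
      unfolding X0_def by (rule sum.group[symmetric]) (use finQ in auto)
    also have "\<dots> = (\<Sum>a\<in>X0. card (Qa a))"
    proof (intro sum.cong refl)
      fix a assume "a \<in> X0"
      have "{xs \<in> Q. hd xs = a} = (\<lambda>ys. a # ys) ` Qa a"
      proof
        show "{xs \<in> Q. hd xs = a} \<subseteq> (\<lambda>ys. a # ys) ` Qa a"
        proof
          fix xs assume h: "xs \<in> {xs \<in> Q. hd xs = a}"
          then have "xs \<noteq> []" using Suc.prems by auto
          then show "xs \<in> (\<lambda>ys. a # ys) ` Qa a" using h unfolding Qa_def
            by (cases xs) auto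
        qed
      qed (auto simp: Qa_def)
      then show "(\<Sum>xs\<in>{xs \<in> Q. hd xs = a}. 1) = card (Qa a)"
        by (simp add: card_image)
    qed
    finally show ?thesis .
  qed
  define S where "S = (\<lambda>b. \<Sum>a\<in>{a \<in> X0. F a = b}. card (Qa a))"
  have sumS: "(\<Sum>b\<in>Lk. S b) = card Q"
    unfolding S_def cardQ by (rule sum.group[OF fX0 fLk FX])
  obtain b where b: "b \<in> Lk" "sum S Lk \<le> card Lk * S b"
    using exists_max_sum[OF fLk Lkne] by blast
  define Xb where "Xb = {a \<in> X0. F a = b}"
  have Qpos: "0 < card Q" using finQ Suc.prems by (simp add: card_gt_0_iff)
  have Sb_pos: "0 < S b" using b sumS Qpos by (cases "S b = 0") auto
  have Xbne: "Xb \<noteq> {}"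
  proof
    assume "Xb = {}"
    then have "S b = 0" unfolding S_def Xb_def[symmetric] by simp
    then show False using Sb_pos by simp
  qed
  have fXb: "finite Xb" using fX0 Xb_def by auto
  have XbV: "Xb \<subseteq> V" using X0V Xb_def by auto
  have cXb: "1 \<le> card Xb" using Xbne fXb by (simp add: Suc_leI card_gt_0_iff)
  obtain e where e: "2 ^ e \<le> card Xb" "card Xb < 2 ^ (e + 1)"
    using ex_power_ivl1[of 2 "card Xb"] cXb by auto
  have eM: "e \<le> M"
  proof -
    have "card Xb \<le> card V" using XbV fV by (rule card_mono[rotated])
    then have "(2::nat) ^ e < 2 ^ Suc M" using e cV by linarith
    then have "e < Suc M" using power_less_imp_less_exp[of "2::nat" e "Suc M"] by simp
    then show ?thesis by simp
  qed
  have Sb_le: "S b \<le> card Xb * (CC M k * 2 ^ sum_list b)"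
  proof -
    have "S b \<le> (\<Sum>a\<in>Xb. CC M k * 2 ^ sum_list b)"
      unfolding S_def Xb_def[symmetric] by (rule sum_mono) (use F Xb_def in auto)
    then show ?thesis by simp
  qed
  have good: "good V Q (map (\<lambda>e. 2 ^ e) (e # b))"
  proof -
    have "\<forall>a\<in>Xb. good V {ys. a # ys \<in> Q} (map (\<lambda>e. 2 ^ e) b)"
      using F Xb_def Qa_def by auto
    then show ?thesis using XbV e(1) by (simp only: good.simps list.map) blast
  qed
  have "card Q \<le> (M + 1) ^ k * S b" using b sumS cLk by simp
  also have "\<dots> \<le> (M + 1) ^ k * (card Xb * (CC M k * 2 ^ sum_list b))"
    using Sb_le by simp
  also have "\<dots> \<le> (M + 1) ^ k * (2 ^ (e + 1) * (CC M k * 2 ^ sum_list b))"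
    using e(2) by (intro mult_left_mono) auto
  also have "\<dots> = CC M (Suc k) * 2 ^ sum_list (e # b)"
    by (simp add: power_add algebra_simps)
  finally have "card Q \<le> CC M (Suc k) * 2 ^ sum_list (e # b)" .
  moreover have "length (e # b) = Suc k" "set (e # b) \<subseteq> {0..M}" using b eM Lk_def by auto
  ultimately show ?case using good by (intro exI[of _ "e # b"]) simp
qed


lemma CC_bound: "CC M k \<le> 2 ^ k * (M + 1) ^ ((k - 1)^2)"
proof (induction k)
  case 0
  then show ?case by simp
next
  case (Suc k)
  have ex: "k + (k - 1)^2 \<le> (Suc k - 1)^2"
  proof (cases k)
    case 0 then show ?thesis by simp
  next
    case (Suc j) then show ?thesis by (simp add: power2_eq_square)
  qed
  have "CC M (Suc k) = 2 * (M + 1) ^ k * CC M k" by simp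
  also have "\<dots> \<le> 2 * (M + 1) ^ k * (2 ^ k * (M + 1) ^ ((k - 1)^2))"
    using Suc.IH by (intro mult_left_mono) auto
  also have "\<dots> = 2 ^ Suc k * (M + 1) ^ (k + (k - 1)^2)"
    by (simp add: power_add)
  also have "\<dots> \<le> 2 ^ Suc k * (M + 1) ^ ((Suc k - 1)^2)"
    using ex by (intro mult_left_mono power_increasing) auto
  finally show ?case .
qed

lemma choose_sub:
  fixes es :: "nat list"
  shows "L \<le> sum_list es \<Longrightarrow> \<exists>es'. list_all2 (\<le>) es' es \<and> sum_list es' = L"
proof (induction es arbitrary: L)
  case Nil
  then show ?case by simp
next
  case (Cons e es)
  have "L - min e L \<le> sum_list es" using Cons.prems by auto
  then obtain es' where "list_all2 (\<le>) es' es" "sum_list es' = L - min e L"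
    using Cons.IH by blast
  then show ?case by (intro exI[of _ "min e L # es'"]) auto
qed

lemma good_mono:
  "good V Q ms \<Longrightarrow> list_all2 (\<le>) ms' ms \<Longrightarrow> good V Q ms'"
proof (induction ms arbitrary: Q ms')
  case Nil
  then show ?case by simp
next
  case (Cons m ms)
  obtain m' ms'' where ms': "ms' = m' # ms''" "m' \<le> m" "list_all2 (\<le>) ms'' ms"
    using Cons.prems(2) by (cases ms') auto
  obtain A where A: "A \<subseteq> V" "m \<le> card A" "\<forall>a\<in>A. good V {ys. a # ys \<in> Q} ms"
    using Cons.prems(1) by auto
  have "\<forall>a\<in>A. good V {ys. a # ys \<in> Q} ms''" using A(3) Cons.IH ms'(3) by blast
  then show ?case using A ms' by (simp only: good.simps) (intro exI[of _ A], auto)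
qed

lemma disc_as_PrW:
  assumes fV: "finite V"
  shows "disc_prob E V h p v = PrW V ({0..<h} \<times> UNIV)
     (\<lambda>u x. if snd x then p ! fst x / real h else (1 - p ! fst x) / real h)
     (\<lambda>\<psi>. discovered E h (restrict (\<lambda>u. fst (\<psi> u)) V) {u\<in>V. snd (\<psi> u)} v)"
proof -
  define Om where "Om = ({0..<h} \<times> (UNIV::bool set))"
  define f where "f = (\<lambda>(\<phi>, S). (1 / real h ^ card V) * (\<Prod>u\<in>S. p ! \<phi> u) * (\<Prod>u\<in>V - S. 1 - p ! \<phi> u) *
        (if discovered E h \<phi> S v then 1 else (0::real)))"
  define g where "g = (\<lambda>\<psi>::'a \<Rightarrow> nat \<times> bool. (restrict (\<lambda>u. fst (\<psi> u)) V, {u\<in>V. snd (\<psi> u)}))"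
  define g' where "g' = (\<lambda>(\<phi>::'a \<Rightarrow> nat, S). restrict (\<lambda>u. (\<phi> u, u \<in> S)) V)"
  have "disc_prob E V h p v = (\<Sum>x \<in> (V \<rightarrow>\<^sub>E {0..<h}) \<times> Pow V. f x)"
    unfolding disc_prob_def f_def by (simp add: sum.cartesian_product)
  have bij: "bij_betw g (PiE V (\<lambda>_. Om)) ((V \<rightarrow>\<^sub>E {0..<h}) \<times> Pow V)"
  proof (rule bij_betw_byWitness[where f'=g'])
    show "\<forall>a\<in>PiE V (\<lambda>_. Om). g' (g a) = a"
      unfolding g_def g'_def by (auto simp: PiE_def extensional_def fun_eq_iff)
    show "\<forall>a'\<in>(V \<rightarrow>\<^sub>E {0..<h}) \<times> Pow V. g (g' a') = a'"
      unfolding g_def g'_def by (auto simp: PiE_def extensional_def fun_eq_iff)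
    show "g ` PiE V (\<lambda>_. Om) \<subseteq> (V \<rightarrow>\<^sub>E {0..<h}) \<times> Pow V"
      unfolding g_def Om_def by (auto simp: PiE_def Pi_def)
    show "g' ` ((V \<rightarrow>\<^sub>E {0..<h}) \<times> Pow V) \<subseteq> PiE V (\<lambda>_. Om)"
      unfolding g'_def Om_def by (auto simp: PiE_def Pi_def)
  qed
  have "disc_prob E V h p v = (\<Sum>\<psi> \<in> PiE V (\<lambda>_. Om). f (g \<psi>))"
    unfolding disc_prob_def f_def
    by (simp add: sum.cartesian_product sum.reindex_bij_betw[OF bij])
  also have "\<dots> = PrW V Om
     (\<lambda>u x. if snd x then p ! fst x / real h else (1 - p ! fst x) / real h)
     (\<lambda>\<psi>. discovered E h (restrict (\<lambda>u. fst (\<psi> u)) V) {u\<in>V. snd (\<psi> u)} v)"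
    unfolding PrW_def
  proof (intro sum.cong refl)
    fix \<psi> :: "'a \<Rightarrow> nat \<times> bool" assume "\<psi> \<in> PiE V (\<lambda>_. Om)"
    have "(\<Prod>u\<in>V. if snd (\<psi> u) then p ! fst (\<psi> u) / real h else (1 - p ! fst (\<psi> u)) / real h)
        = (\<Prod>u\<in>V. (1 / real h) * (if snd (\<psi> u) then p ! fst (\<psi> u) else 1 - p ! fst (\<psi> u)))"
      by (intro prod.cong) auto
    also have "\<dots> = (1 / real h) ^ card V * (\<Prod>u\<in>V. (if snd (\<psi> u) then p ! fst (\<psi> u) else 1 - p ! fst (\<psi> u)))"
      by (simp only: prod.distrib prod_constant)
    also have "\<dots> = (1 / real h) ^ card V * ((\<Prod>u\<in>{u\<in>V. snd (\<psi> u)}. p ! fst (\<psi> u)) * (\<Prod>u\<in>V - {u\<in>V. snd (\<psi> u)}. 1 - p ! fst (\<psi> u)))"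
    proof -
      have "V \<inter> {u. snd (\<psi> u)} = {u\<in>V. snd (\<psi> u)}" "V \<inter> - {u. snd (\<psi> u)} = V - {u\<in>V. snd (\<psi> u)}" by auto
      then show ?thesis using prod.If_cases[OF fV, of "\<lambda>u. snd (\<psi> u)" "\<lambda>u. p ! fst (\<psi> u)" "\<lambda>u. 1 - p ! fst (\<psi> u)"]
        by simp
    qed
    finally have w: "(\<Prod>u\<in>V. if snd (\<psi> u) then p ! fst (\<psi> u) / real h else (1 - p ! fst (\<psi> u)) / real h)
        = (1 / real h) ^ card V * ((\<Prod>u\<in>{u\<in>V. snd (\<psi> u)}. p ! fst (\<psi> u)) * (\<Prod>u\<in>V - {u\<in>V. snd (\<psi> u)}. 1 - p ! fst (\<psi> u)))" .
    have p1: "(\<Prod>u\<in>{u\<in>V. snd (\<psi> u)}. p ! (restrict (\<lambda>u. fst (\<psi> u)) V) u) = (\<Prod>u\<in>{u\<in>V. snd (\<psi> u)}. p ! fst (\<psi> u))"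
      by (intro prod.cong) auto
    have p2: "(\<Prod>u\<in>V - {u\<in>V. snd (\<psi> u)}. 1 - p ! (restrict (\<lambda>u. fst (\<psi> u)) V) u) = (\<Prod>u\<in>V - {u\<in>V. snd (\<psi> u)}. 1 - p ! fst (\<psi> u))"
      by (intro prod.cong) auto
    show "f (g \<psi>) = (\<Prod>u\<in>V. if snd (\<psi> u) then p ! fst (\<psi> u) / real h else (1 - p ! fst (\<psi> u)) / real h) *
          (if discovered E h (restrict (\<lambda>u. fst (\<psi> u)) V) {u\<in>V. snd (\<psi> u)} v then 1 else 0)"
      unfolding w f_def g_def using p1 p2 by (simp add: power_one_over)
  qed
  finally show ?thesis unfolding Om_def .
qed

lemma alg_bound:
  fixes x :: real assumes "0 \<le> x"
  shows "(1 - x / 2) * x \<le> 1 - 1 / (1 + x + x\<^sup>2 / 2)"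
proof -
  have x2: "0 \<le> x * x" using assms by simp
  define D where "D = 2 + 2 * x + x * x"
  have D0: "0 < D" unfolding D_def using assms x2 by linarith
  have r: "1 / (1 + x + x\<^sup>2 / 2) = 2 / D" unfolding D_def by (simp add: power2_eq_square field_simps)
  have e1: "(2 - x) * x * D = 2 * (2 * x + x * x) - x * x * x * x"
    unfolding D_def by (simp add: algebra_simps)
  have e2: "1 - 2 / D = (2 * x + x * x) / D" using D0 unfolding D_def by (simp add: field_simps)
  have "0 \<le> (x * x) * (x * x)" by (rule mult_nonneg_nonneg[OF x2 x2])
  then have "0 \<le> x * x * x * x" by (simp add: mult.assoc)
  then have "(2 - x) * x * D \<le> 2 * (2 * x + x * x)" using e1 by linarith
  then have "(2 - x) * x \<le> 2 * ((2 * x + x * x) / D)" using D0 by (simp add: le_divide_eq mult.commute)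
  moreover have "(1 - x / 2) * x = ((2 - x) * x) / 2" by (simp add: field_simps)
  ultimately have "(1 - x / 2) * x \<le> (2 * x + x * x) / D" by linarith
  then show ?thesis using e2 r by simp
qed
lemma factor_bound:
  fixes h :: nat assumes "1 \<le> h"
  shows "(1 - 1 / (2 * real h)) / real h \<le> 1 - (1 - (1/2) ^ e / real h) ^ (2 ^ e)"
proof -
  define y where "y = (1/2::real) ^ e / real h"
  define x where "x = 1 / real h"
  have hpos: "1 \<le> real h" using assms by simp
  have y0: "0 \<le> y" unfolding y_def by simp
  have y1: "y \<le> 1"
  proof -
    have "(1/2::real) ^ e \<le> 1" by (rule power_le_one) auto
    then have "(1/2::real) ^ e / real h \<le> 1 / 1" using hpos by (intro frac_le) auto
    then show ?thesis unfolding y_def by simp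
  qed
  have my: "real (2 ^ e) * y = x"
  proof -
    have "real (2 ^ e) * (1/2::real) ^ e = 1" by (simp add: power_one_over)
    then show ?thesis unfolding y_def x_def by (metis times_divide_eq_right)
  qed
  have "(1 - y) ^ (2 ^ e) \<le> exp (- y) ^ (2 ^ e)"
    using y1 exp_ge_add_one_self[of "-y"] by (intro power_mono) auto
  also have "\<dots> = exp (real (2 ^ e) * (- y))" by (rule exp_of_nat_mult[symmetric])
  also have "\<dots> = exp (- x)" using my by simp
  also have "\<dots> = 1 / exp x" by (simp add: exp_minus')
  also have "\<dots> \<le> 1 / (1 + x + x\<^sup>2 / 2)"
  proof -
    have x0: "0 \<le> x" unfolding x_def by simp
    have "0 \<le> x\<^sup>2 / 2" by simp
    then have "0 < 1 + x + x\<^sup>2 / 2" using x0 by linarith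
    then show ?thesis using exp_lower_Taylor_quadratic[OF x0] by (intro divide_left_mono) auto
  qed
  finally have "1 - 1 / (1 + x + x\<^sup>2 / 2) \<le> 1 - (1 - y) ^ (2 ^ e)" by simp
  moreover have "(1 - x / 2) * x \<le> 1 - 1 / (1 + x + x\<^sup>2 / 2)" using alg_bound[of x] x_def by simp
  moreover have "(1 - 1 / (2 * real h)) / real h = (1 - x / 2) * x" unfolding x_def by simp
  ultimately show ?thesis unfolding y_def by simp
qed

lemma e_bound: "(1 - 1 / exp 1) ^ 2 \<le> (1/2::real)"
proof -
  have "exp (1::real) \<le> 3" using exp_bound[of 1] by simp
  then have a: "1 / 3 \<le> 1 / exp (1::real)" by (intro divide_left_mono) auto
  have b: "1 / exp (1::real) \<le> 1" by simp
  have "(1 - 1 / exp 1) ^ 2 \<le> (2/3::real) ^ 2"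
    using a b by (intro power_mono) auto
  then show ?thesis by (simp add: power2_eq_square)
qed



lemma prod_list_pow: "prod_list (map (\<lambda>e. (c::real) ^ e) xs) = c ^ sum_list xs"
  by (induction xs) (auto simp: power_add)

theorem proposition4:
  fixes V :: "'a set" and E :: "'a \<Rightarrow> 'a \<Rightarrow> bool" and h :: nat and \<Lambda> :: real and v :: 'a
  assumes "finite V"
    and "\<And>x y. E x y \<Longrightarrow> E y x"
    and "\<And>x. \<not> E x x"
    and "\<And>x y. E x y \<Longrightarrow> x \<in> V \<and> y \<in> V"
    and "3 \<le> h"
    and "1 \<le> \<Lambda>"
    and "card V \<ge> 2"
    and "v \<in> V"
    and "real (t_count E V h v) \<ge>
           \<Lambda> * (2 * real h * log 2 (real (card V))) ^ ((h - 1)^2) * 2 / (1 / real h ^ h)"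
  shows "\<exists>p \<in> Product h \<Lambda>. disc_prob E V h p v \<ge> (1 - 1 / exp 1) ^ (h - 1) * (1 / real h ^ h)"
proof -
  have fV: "finite V" using assms(1) .
  have h3: "3 \<le> h" using assms(5) .
  define n where "n = card V"
  have n2: "2 \<le> n" using assms(7) n_def by simp
  obtain M where M: "2 ^ M \<le> n" "n < 2 ^ (M + 1)" using ex_power_ivl1[of 2 n] n2 by auto
  define Q where "Q = {xs. cycle_list E V h xs \<and> v \<in> set xs}"
  have Qprop: "\<forall>ys\<in>Q. distinct ys \<and> length ys = h \<and> set ys \<subseteq> V"
    by (auto simp: Q_def cycle_list_def)
  have finQ: "finite Q"
    by (rule finite_subset[of _ "{xs. set xs \<subseteq> V \<and> length xs = h}"])
       (use Qprop fV in \<open>auto intro: finite_lists_length_eq\<close>)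
  have tQ: "t_count E V h v \<le> card Q"
  proof -
    have "{C \<in> h_cycles E V h. v \<in> \<Union>C} \<subseteq> cycle_edges ` Q"
    proof
      fix C assume "C \<in> {C \<in> h_cycles E V h. v \<in> \<Union>C}"
      then obtain xs where xs: "cycle_list E V h xs" "C = cycle_edges xs" "v \<in> \<Union>C"
        unfolding h_cycles_def by auto
      have len: "length xs = h" using xs(1) by (simp add: cycle_list_def)
      obtain i where i: "i < length xs" "v \<in> {xs ! i, xs ! ((i + 1) mod length xs)}"
        using xs(2,3) unfolding cycle_edges_def by auto
      have "(i + 1) mod length xs < length xs" using i(1) by (intro mod_less_divisor) linarith
      then have "v \<in> set xs" using i nth_mem by auto
      then show "C \<in> cycle_edges ` Q" using xs Q_def by auto
    qed
    then have "t_count E V h v \<le> card (cycle_edges ` Q)"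
      unfolding t_count_def using finQ by (intro card_mono) auto
    also have "\<dots> \<le> card Q" using finQ by (rule card_image_le)
    finally show ?thesis .
  qed
  have logn: "1 \<le> log 2 (real n)"
  proof -
    have "log 2 (2::real) \<le> log 2 (real n)" using n2 by (subst log_le_cancel_iff) auto
    then show ?thesis by simp
  qed
  define K where "K = (2 * real h * log 2 (real n)) ^ ((h - 1)^2) * (2 * real h ^ h)"
  have hyp: "\<Lambda> * K \<le> real (t_count E V h v)"
  proof -
    have "\<Lambda> * (2 * real h * log 2 (real (card V))) ^ ((h - 1)^2) * 2 / (1 / real h ^ h) = \<Lambda> * K"
      unfolding K_def n_def by (simp add: field_simps)
    then show ?thesis using assms(9) by linarith
  qed
  have Kpos: "0 < K" unfolding K_def using logn h3 by simp
  have QK: "\<Lambda> * K \<le> real (card Q)" using hyp tQ by linarith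
  have Qne: "Q \<noteq> {}"
  proof
    assume "Q = {}"
    then have "\<Lambda> * K \<le> 0" using QK by simp
    moreover have "0 < \<Lambda> * K" using Kpos assms(6) by simp
    ultimately show False by simp
  qed
  have cV: "card V < 2 ^ Suc M" using M n_def by simp
  obtain es where es: "length es = h" "set es \<subseteq> {0..M}" "good V Q (map (\<lambda>e. 2 ^ e) es)"
      "card Q \<le> CC M h * 2 ^ sum_list es"
    using comb[OF fV cV Qne] Qprop by blast
  have CCK: "real (CC M h) \<le> K"
  proof -
    have "real M = log 2 (2 ^ M)" by (simp add: log_nat_power)
    also have "\<dots> \<le> log 2 (real n)" using M(1) n2 by (subst log_le_cancel_iff) (auto simp del: of_nat_power simp: of_nat_power[symmetric])
    finally have Mle: "real M \<le> log 2 (real n)" .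
    have "real M + 1 \<le> 2 * real h * log 2 (real n)"
    proof -
      have "real M + 1 \<le> 2 * log 2 (real n)" using Mle logn by linarith
      also have "\<dots> = 1 * (2 * log 2 (real n))" by simp
      also have "\<dots> \<le> real h * (2 * log 2 (real n))" using logn h3 by (intro mult_right_mono) auto
      finally show ?thesis by simp
    qed
    then have a: "(real M + 1) ^ ((h - 1)^2) \<le> (2 * real h * log 2 (real n)) ^ ((h - 1)^2)"
      by (intro power_mono) auto
    have b: "(2::real) ^ h \<le> 2 * real h ^ h"
    proof -
      have "(2::real) ^ h \<le> real h ^ h" using h3 by (intro power_mono) auto
      moreover have "0 \<le> real h ^ h" by simp
      ultimately show ?thesis by linarith
    qed
    have "real (CC M h) \<le> real (2 ^ h * (M + 1) ^ ((h - 1)^2))" using CC_bound[of M h] by linarith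
    also have "\<dots> = 2 ^ h * (real M + 1) ^ ((h - 1)^2)" by (simp add: add.commute)
    also have "\<dots> \<le> (2 * real h ^ h) * (2 * real h * log 2 (real n)) ^ ((h - 1)^2)"
      using a b by (intro mult_mono) auto
    also have "\<dots> = K" unfolding K_def by simp
    finally show ?thesis .
  qed
  have Lam_le: "\<Lambda> \<le> 2 ^ sum_list es"
  proof -
    have "real (card Q) \<le> real (CC M h) * 2 ^ sum_list es"
    proof -
      have "real (card Q) \<le> real (CC M h * 2 ^ sum_list es)" using es(4) by (simp only: of_nat_le_iff)
      then show ?thesis by simp
    qed
    also have "\<dots> \<le> K * 2 ^ sum_list es" using CCK by (intro mult_right_mono) auto
    finally have "\<Lambda> * K \<le> K * 2 ^ sum_list es" using QK by linarith
    then show ?thesis using Kpos by (simp add: mult.commute)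
  qed
  define L where "L = nat \<lceil>log 2 \<Lambda>\<rceil>"
  have logL0: "0 \<le> log 2 \<Lambda>" using assms(6) by simp
  have Lr: "real L = of_int \<lceil>log 2 \<Lambda>\<rceil>" unfolding L_def using logL0 by simp
  have L_le: "L \<le> sum_list es"
  proof -
    have "log 2 \<Lambda> \<le> log 2 (2 ^ sum_list es)" using Lam_le assms(6) by (subst log_le_cancel_iff) auto
    then have "log 2 \<Lambda> \<le> real (sum_list es)" by (simp add: log_nat_power)
    then have "\<lceil>log 2 \<Lambda>\<rceil> \<le> int (sum_list es)" by (simp add: ceiling_le_iff)
    then show ?thesis unfolding L_def by (simp only: nat_le_iff)
  qed
  obtain es' where es': "list_all2 (\<le>) es' es" "sum_list es' = L"
    using choose_sub[OF L_le] by blast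
  have les': "length es' = h" using es'(1) es(1) by (simp add: list_all2_lengthD)
  define p where "p = map (\<lambda>e. (1/2::real) ^ e) es'"
  have lenp: "length p = h" using les' p_def by simp
  have pnth: "\<And>i. i < h \<Longrightarrow> p ! i = (1/2) ^ (es' ! i)" using les' p_def by simp
  have p01: "\<And>i. i < h \<Longrightarrow> 0 \<le> p ! i \<and> p ! i \<le> 1" using pnth by (simp add: power_le_one)
  have LamL: "\<Lambda> \<le> 2 ^ L"
  proof -
    have "\<Lambda> = 2 powr (log 2 \<Lambda>)" using assms(6) by simp
    also have "\<dots> \<le> 2 powr (real L)" using Lr by (intro powr_mono) auto
    also have "\<dots> = 2 ^ L" by (simp add: powr_realpow)
    finally show ?thesis .
  qed
  have pProd: "p \<in> Product h \<Lambda>"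
    unfolding Product_def
  proof (intro CollectI conjI allI impI)
    show "length p = h" by (rule lenp)
  next
    fix i assume i: "i < h"
    have "es' ! i \<le> L" using elem_le_sum_list[of i es'] i les' es'(2) by simp
    moreover have "real L \<le> log 2 \<Lambda> + 1" using Lr by linarith
    ultimately have "real (es' ! i) \<le> log 2 \<Lambda> + 1" by linarith
    then show "\<exists>j::nat. real j \<le> log 2 \<Lambda> + 1 \<and> p ! i = (1/2) ^ j" using pnth[OF i] by blast
  next
    have "prod_list p = (1/2) ^ L" unfolding p_def prod_list_pow es'(2) by simp
    also have "\<dots> = 1 / 2 ^ L" by (simp add: power_one_over)
    also have "\<dots> \<le> 1 / \<Lambda>" using LamL assms(6) by (intro divide_left_mono) auto
    finally show "prod_list p \<le> 1 / \<Lambda>" .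
  qed
  have goodp: "good V Q (map (\<lambda>e. 2 ^ e) es')"
  proof (rule good_mono[OF es(3)])
    show "list_all2 (\<le>) (map (\<lambda>e. (2::nat) ^ e) es') (map (\<lambda>e. 2 ^ e) es)"
      unfolding list_all2_map1 list_all2_map2 by (rule list_all2_mono[OF es'(1)]) (simp add: power_increasing)
  qed
  define Om where "Om = {0..<h} \<times> (UNIV :: bool set)"
  define \<rho> where "\<rho> = (\<lambda>(u::'a) (x::nat \<times> bool). if snd x then p ! fst x / real h else (1 - p ! fst x) / real h)"
  define ts where "ts = map (\<lambda>i. (i, True)) [0..<h]"
  define rs where "rs = map (\<lambda>i. p ! i / real h) [0..<h]"
  define ms where "ms = map (\<lambda>e. (2::nat) ^ e) es'"
  have fO: "finite Om" unfolding Om_def by simp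
  have valid: "validW V Om \<rho>"
    unfolding validW_def
  proof (intro ballI conjI)
    fix u x assume "x \<in> Om"
    then have "fst x < h" unfolding Om_def by auto
    then show "0 \<le> \<rho> u x" using p01[of "fst x"] unfolding \<rho>_def by auto
  next
    fix u
    have "sum (\<rho> u) Om = (\<Sum>i\<in>{0..<h}. \<Sum>b\<in>(UNIV::bool set). \<rho> u (i, b))"
      unfolding Om_def by (simp add: sum.cartesian_product)
    also have "\<dots> = (\<Sum>i\<in>{0..<h}. 1 / real h)"
      unfolding \<rho>_def UNIV_bool by (intro sum.cong refl) (simp add: add_divide_distrib[symmetric])
    also have "\<dots> = 1" using h3 by simp
    finally show "sum (\<rho> u) Om = 1" .
  qed
  have TB: "(\<Prod>j<length ts. 1 - (1 - rs ! j) ^ (ms ! j)) \<le> PrW V Om \<rho> (EvW Q ts)"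
  proof (rule tree_bound[OF fV fO])
    show "\<forall>ys\<in>Q. distinct ys \<and> length ys = length ts \<and> set ys \<subseteq> V" using Qprop ts_def by simp
    show "good V Q ms" using goodp ms_def by simp
    show "length ms = length ts" using ms_def ts_def les' by simp
    show "distinct ts" unfolding ts_def by (simp add: distinct_map inj_on_def)
    show "set ts \<subseteq> Om" unfolding ts_def Om_def by auto
    show "length rs = length ts" unfolding rs_def ts_def by simp
    show "\<forall>j<length ts. 0 \<le> rs ! j \<and> rs ! j \<le> 1"
    proof (intro allI impI)
      fix j assume "j < length ts"
      then have j: "j < h" using ts_def by simp
      have "p ! j / real h \<le> 1 / 1" using p01[OF j] h3 by (intro frac_le) auto
      then show "0 \<le> rs ! j \<and> rs ! j \<le> 1" using p01[OF j] j unfolding rs_def by simp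
    qed
    show "validW V Om \<rho>" by (rule valid)
    show "\<forall>u\<in>V. \<forall>j<length ts. rs ! j \<le> \<rho> u (ts ! j)"
      unfolding rs_def ts_def \<rho>_def by simp
  qed
  define c where "c = (1 - 1 / (2 * real h)) / real h"
  have c0: "0 \<le> c" unfolding c_def using h3 by simp
  have "c ^ h = (\<Prod>j<length ts. c)" unfolding ts_def by simp
  also have "\<dots> \<le> (\<Prod>j<length ts. 1 - (1 - rs ! j) ^ (ms ! j))"
  proof (rule prod_mono)
    fix j assume "j \<in> {..<length ts}"
    then have j: "j < h" using ts_def by simp
    have "rs ! j = (1/2) ^ (es' ! j) / real h" unfolding rs_def using j pnth by simp
    moreover have "ms ! j = 2 ^ (es' ! j)" unfolding ms_def using j les' by simp
    ultimately show "0 \<le> c \<and> c \<le> 1 - (1 - rs ! j) ^ (ms ! j)"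
      using c0 factor_bound[of h "es' ! j"] h3 unfolding c_def by simp
  qed
  also have "\<dots> \<le> PrW V Om \<rho> (EvW Q ts)" by (rule TB)
  also have "\<dots> \<le> PrW V Om \<rho> (\<lambda>\<psi>. discovered E h (restrict (\<lambda>u. fst (\<psi> u)) V) {u\<in>V. snd (\<psi> u)} v)"
  proof (rule PrW_mono[OF valid])
    fix \<psi> assume "\<psi> \<in> PiE V (\<lambda>_. Om)" and ev: "EvW Q ts \<psi>"
    then obtain ys where ys: "ys \<in> Q" "\<forall>j<h. \<psi> (ys ! j) = (j, True)"
      unfolding EvW_def ts_def by auto
    have cl: "cycle_list E V h ys" "v \<in> set ys" using ys(1) Q_def by auto
    have ysV: "set ys \<subseteq> V" and lys: "length ys = h" using cl(1) by (auto simp: cycle_list_def)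
    define \<phi> where "\<phi> = restrict (\<lambda>u. fst (\<psi> u)) V"
    define S where "S = {u\<in>V. snd (\<psi> u)}"
    have phij: "\<And>j. j < h \<Longrightarrow> \<phi> (ys ! j) = j" using ys(2) ysV lys nth_mem unfolding \<phi>_def by fastforce
    have inS: "set ys \<subseteq> S"
    proof
      fix u assume "u \<in> set ys"
      then obtain j where "j < h" "u = ys ! j" using lys by (auto simp: in_set_conv_nth)
      then show "u \<in> S" using ys(2) ysV \<open>u \<in> set ys\<close> unfolding S_def by auto
    qed
    have "cycle_list E S h ys" using cl(1) inS by (auto simp: cycle_list_def)
    moreover have "inj_on \<phi> (set ys)"
    proof (rule inj_onI)
      fix x y assume "x \<in> set ys" "y \<in> set ys" "\<phi> x = \<phi> y"
      then obtain i j where "i < h" "x = ys ! i" "j < h" "y = ys ! j" using lys by (auto simp: in_set_conv_nth)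
      then show "x = y" using phij \<open>\<phi> x = \<phi> y\<close> by auto
    qed
    ultimately show "discovered E h (restrict (\<lambda>u. fst (\<psi> u)) V) {u\<in>V. snd (\<psi> u)} v"
      unfolding discovered_def \<phi>_def[symmetric] S_def[symmetric] using cl(2) by blast
  qed
  also have "\<dots> = disc_prob E V h p v"
    unfolding Om_def \<rho>_def by (rule disc_as_PrW[OF fV, symmetric])
  finally have D: "c ^ h \<le> disc_prob E V h p v" .
  have "(1 - 1 / exp 1) ^ (h - 1) * (1 / real h ^ h) \<le> (1/2) * (1 / real h ^ h)"
  proof (rule mult_right_mono)
    have a: "0 \<le> 1 - 1 / exp (1::real)" by simp
    have b: "1 - 1 / exp (1::real) \<le> 1" by simp
    have "(1 - 1 / exp (1::real)) ^ (h - 1) \<le> (1 - 1 / exp 1) ^ 2"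
      using a b h3 by (intro power_decreasing) auto
    then show "(1 - 1 / exp (1::real)) ^ (h - 1) \<le> 1/2" using e_bound by linarith
  qed simp
  also have "\<dots> \<le> c ^ h"
  proof -
    have "1 + real h * (- 1 / (2 * real h)) \<le> (1 + (- 1 / (2 * real h))) ^ h"
      using h3 by (intro Bernoulli_inequality) (simp add: field_simps)
    moreover have "1 + real h * (- 1 / (2 * real h)) = 1/2" using h3 by simp
    ultimately have B: "1/2 \<le> (1 - 1 / (2 * real h)) ^ h" by simp
    have "c ^ h = (1 - 1 / (2 * real h)) ^ h * (1 / real h ^ h)"
      unfolding c_def by (simp add: power_divide)
    moreover have "(1/2) * (1 / real h ^ h) \<le> (1 - 1 / (2 * real h)) ^ h * (1 / real h ^ h)"
      by (rule mult_right_mono[OF B]) simp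
    ultimately show ?thesis by simp
  qed
  finally show ?thesis using D pProd by (meson order_trans)
qed

end
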